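(* Let $p$ be a prime, $k \geq 3$ an integer, $N = p^{2k}$, and let $d$ be odd. In the coefficient-choosing game of degree $d$ over $\mathbb{Z}/N\mathbb{Z}$, Wanda has a winning strategy (whether she moves first or second).
   Context: The coefficient-choosing game of degree $d$ over $R = \mathbb{Z}/N\mathbb{Z}$: Nora and Wanda alternately choose coefficients of $f(x) = a_d x^d + \cdots + a_0$; on each move the current player picks a not-yet-chosen coefficient and assigns it a value in $R$, subject to $a_d \neq 0$, $a_0 \neq 0$. After all $d+1$ coefficients are chosen, Wanda wins if $f$ has a root in $R$, and Nora wins otherwise. *)

theory Defs
  imports Main "HOL-Number_Theory.Number_Theory"
begin

text \<open>Residues are represented by
integers in {0..<N}. A position is a partial assignment s :: nat => int option of the
coefficients a_0,...,a_d (indices > d are ignored).\<close>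

definition legal_move :: "nat \<Rightarrow> nat \<Rightarrow> nat \<Rightarrow> int \<Rightarrow> bool" where
  "legal_move N d i v \<longleftrightarrow> i \<le> d \<and> v \<in> {0..<int N} \<and> ((i = 0 \<or> i = d) \<longrightarrow> v \<noteq> 0)"

definition complete_pos :: "nat \<Rightarrow> (nat \<Rightarrow> int option) \<Rightarrow> bool" where
  "complete_pos d s \<longleftrightarrow> (\<forall>i\<le>d. s i \<noteq> None)"

definition has_root_mod :: "nat \<Rightarrow> nat \<Rightarrow> (nat \<Rightarrow> int option) \<Rightarrow> bool" where
  "has_root_mod N d s \<longleftrightarrow>
     (\<exists>x \<in> {0..<int N}. (\<Sum>i\<le>d. the (s i) * x ^ i) mod int N = 0)"

text \<open>wanda_wins N d wanda_to_move s: Wanda has a winning strategy from position s,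
where the flag tells whether it is Wanda's turn. Least fixed point = winning within
the (finite) game.\<close>
inductive wanda_wins :: "nat \<Rightarrow> nat \<Rightarrow> bool \<Rightarrow> (nat \<Rightarrow> int option) \<Rightarrow> bool"
  for N d where
  terminal: "complete_pos d s \<Longrightarrow> has_root_mod N d s \<Longrightarrow> wanda_wins N d t s"
| wanda_move: "\<not> complete_pos d s \<Longrightarrow> s i = None \<Longrightarrow> legal_move N d i v \<Longrightarrow>
     wanda_wins N d False (s(i := Some v)) \<Longrightarrow> wanda_wins N d True s"
| nora_move: "\<not> complete_pos d s \<Longrightarrow>
     (\<And>i v. s i = None \<Longrightarrow> legal_move N d i v \<Longrightarrow> wanda_wins N d True (s(i := Some v))) \<Longrightarrow>
     wanda_wins N d False s"

end

theory Submission imports Defs begin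

lemma solveL:
  fixes p :: nat and a :: int
  assumes "prime p" "K \<ge> 1" "\<not> (int p)^K dvd a"
  shows "\<exists>y. [a*y = -((int p)^(K-1))] (mod (int p)^K)"
proof -
  have pr: "prime (int p)" using assms(1) by simp
  have "gcd a ((int p)^K) dvd (int p)^K" by simp
  then obtain m where m: "m \<le> K" "normalize (gcd a ((int p)^K)) = (int p)^m"
    using divides_primepow[OF pr] by metis
  have g: "gcd a ((int p)^K) = (int p)^m" using m(2) by simp
  have "m \<noteq> K" using g assms(3) by (metis gcd_dvd1)
  hence "m \<le> K - 1" using m(1) by simp
  hence "(int p)^m dvd (int p)^(K-1)" by (simp add: le_imp_power_dvd)
  hence "gcd a ((int p)^K) dvd -((int p)^(K-1))" using g by simp
  thus ?thesis by (rule cong_solve_dvd_int)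
qed

lemma trunc:
  fixes x :: int and n :: int
  assumes "\<And>i. i > m \<Longrightarrow> n dvd x^i" "m \<le> d"
  shows "[(\<Sum>i\<le>d. c i * x^i) = (\<Sum>i\<le>m. c i * x^i)] (mod n)"
  using assms(2)
proof (induction d rule: dec_induct)
  case base
  then show ?case by simp
next
  case (step j)
  have "n dvd c (Suc j) * x ^ Suc j" using assms(1)[of "Suc j"] step(1) by (simp add: dvd_mult)
  hence "[c (Suc j) * x ^ Suc j = 0] (mod n)" by (simp add: cong_0_iff)
  from cong_add[OF step(3) this] show ?case by simp
qed

lemma eval_mod:
  fixes x :: int
  shows "(\<Sum>i\<le>d. c i * (x mod n)^i) mod n = (\<Sum>i\<le>d. c i * x^i) mod n"
proof -
  have "[(\<Sum>i\<le>d. c i * (x mod n)^i) = (\<Sum>i\<le>d. c i * x^i)] (mod n)"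
    by (intro cong_sum cong_mult cong_pow) (auto simp: cong_def)
  thus ?thesis by (simp add: cong_def)
qed

lemma root_from_cong:
  fixes x :: int
  assumes "[(\<Sum>i\<le>d. the (s i) * x^i) = 0] (mod int N)" "N > 0"
  shows "has_root_mod N d s"
  unfolding has_root_mod_def
proof (rule bexI[of _ "x mod int N"])
  show "(\<Sum>i\<le>d. the (s i) * (x mod int N)^i) mod int N = 0"
    using eval_mod[of "\<lambda>i. the (s i)" x "int N" d] assms(1) by (simp add: cong_def)
  show "x mod int N \<in> {0..<int N}" using assms(2) by simp
qed

lemma strategy:
  assumes inv: "\<And>t s. Q t s \<Longrightarrow> complete_pos d s \<Longrightarrow> has_root_mod N d s"
  and wmove: "\<And>s. Q True s \<Longrightarrow> \<not> complete_pos d s \<Longrightarrow>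
       \<exists>i v. s i = None \<and> legal_move N d i v \<and> Q False (s(i := Some v))"
  and nmove: "\<And>s i v. Q False s \<Longrightarrow> \<not> complete_pos d s \<Longrightarrow> s i = None \<Longrightarrow>
       legal_move N d i v \<Longrightarrow> Q True (s(i := Some v))"
  shows "Q t s \<Longrightarrow> wanda_wins N d t s"
proof (induction "card {i. i \<le> d \<and> s i = None}" arbitrary: t s rule: less_induct)
  case less
  have dec: "card {j. j \<le> d \<and> (s(i := Some v)) j = None} < card {i. i \<le> d \<and> s i = None}"
    if "s i = None" "legal_move N d i v" for i v
  proof -
    have "i \<le> d" using that(2) by (simp add: legal_move_def)
    have "{j. j \<le> d \<and> (s(i := Some v)) j = None} \<subset> {i. i \<le> d \<and> s i = None}"
      using that(1) \<open>i \<le> d\<close> by auto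
    moreover have "finite {i. i \<le> d \<and> s i = None}" by simp
    ultimately show ?thesis by (metis psubset_card_mono)
  qed
  show ?case
  proof (cases "complete_pos d s")
    case True
    then show ?thesis using inv less.prems by (blast intro: wanda_wins.terminal)
  next
    case nc: False
    show ?thesis
    proof (cases t)
      case True
      have "Q True s" using less.prems True by simp
      then obtain i v where iv: "s i = None" "legal_move N d i v" "Q False (s(i := Some v))"
        using wmove nc by blast
      have "wanda_wins N d False (s(i := Some v))"
        using less.hyps[OF dec[OF iv(1,2)] iv(3)] .
      then have "wanda_wins N d True s" using nc iv by (blast intro: wanda_wins.wanda_move)
      then show ?thesis using True by simp
    next
      case False
      show ?thesis using False nc
      proof (simp, intro wanda_wins.nora_move)
        fix i v assume iv: "s i = None" "legal_move N d i v"
        show "wanda_wins N d True (s(i := Some v))"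
          using less.hyps[OF dec[OF iv] nmove[OF _ nc iv]] less.prems False by simp
      qed
    qed
  qed
qed

definition pt :: "nat \<Rightarrow> nat \<Rightarrow> nat" where
  "pt d i = (if i = 0 then d else if i = d then 0 else if odd i then i+1 else i-1)"

lemma pt_props:
  assumes "odd d" "i \<le> d"
  shows "pt d i \<le> d" "pt d (pt d i) = i" "pt d i \<noteq> i" "odd (pt d i) \<longleftrightarrow> even i"
    "pt d i = 0 \<longleftrightarrow> i = d" "pt d i = d \<longleftrightarrow> i = 0"
  using assms unfolding pt_def by (auto elim!: oddE evenE)

lemma alt_sum_zero:
  fixes c :: "nat \<Rightarrow> int"
  assumes "odd d" "\<And>i. i \<le> d \<Longrightarrow> c (pt d i) = c i"
  shows "(\<Sum>i\<le>d. c i * (-1)^i) = 0"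
proof -
  let ?S = "(\<Sum>i\<le>d. c i * (-1)^i)"
  have "?S = (\<Sum>i\<le>d. c (pt d i) * (-1)^(pt d i))"
    by (rule sum.reindex_bij_witness[where i="pt d" and j="pt d"])
       (use pt_props[OF assms(1)] in auto)
  also have "\<dots> = (\<Sum>i\<le>d. - (c i * (-1)^i))"
  proof (rule sum.cong)
    fix i assume "i \<in> {..d}"
    hence i: "i \<le> d" by simp
    show "c (pt d i) * (-1)^(pt d i) = - (c i * (-1)^i)"
      using assms(2)[OF i] pt_props(4)[OF assms(1) i]
      by (cases "even i") (auto simp: minus_one_power_iff)
  qed simp
  also have "\<dots> = - ?S" by (simp add: sum_negf)
  finally show ?thesis by simp
qed

definition valid :: "nat \<Rightarrow> nat \<Rightarrow> (nat \<Rightarrow> int option) \<Rightarrow> bool" where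
  "valid N d s = (\<forall>i v. s i = Some v \<longrightarrow> legal_move N d i v)"

definition bal :: "nat \<Rightarrow> (nat \<Rightarrow> int option) \<Rightarrow> bool" where
  "bal d s = (\<forall>i\<le>d. s (pt d i) = s i)"

definition Qp :: "nat \<Rightarrow> nat \<Rightarrow> bool \<Rightarrow> (nat \<Rightarrow> int option) \<Rightarrow> bool" where
  "Qp N d t s = (valid N d s \<and> (if t then (\<exists>i\<le>d. s i \<noteq> None \<and> s (pt d i) = None \<and> bal d (s(i := None)))
      else bal d s))"

lemma valid_upd: "valid N d s \<Longrightarrow> legal_move N d i v \<Longrightarrow> valid N d (s(i := Some v))"
  unfolding valid_def by auto

lemma second_wins:
  assumes "odd d" "N \<ge> 2"
  shows "wanda_wins N d False (\<lambda>_. None)"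
proof -
  note P = pt_props[OF assms(1)]
  have "Qp N d t s \<Longrightarrow> wanda_wins N d t s" for t s
  proof (rule strategy)
    fix t s assume q: "Qp N d t s" and c: "complete_pos d s"
    have t: "\<not> t"
    proof
      assume t
      then obtain i where "i \<le> d" "s (pt d i) = None" using q unfolding Qp_def by auto
      thus False using c P(1) unfolding complete_pos_def by blast
    qed
    hence b: "bal d s" and v: "valid N d s" using q unfolding Qp_def by auto
    have "(\<Sum>i\<le>d. the (s i) * (-1)^i) = 0"
      by (rule alt_sum_zero[OF assms(1)]) (use b in \<open>simp add: bal_def\<close>)
    hence "[(\<Sum>i\<le>d. the (s i) * (-1)^i) = 0] (mod int N)" by simp
    thus "has_root_mod N d s" by (rule root_from_cong) (use assms in simp)
  next
    fix s assume q: "Qp N d True s" and nc: "\<not> complete_pos d s"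
    then obtain i where i: "i \<le> d" "s i \<noteq> None" "s (pt d i) = None" "bal d (s(i := None))"
      and v: "valid N d s" unfolding Qp_def by auto
    obtain w where w: "s i = Some w" using i(2) by auto
    have lw: "legal_move N d i w" using v w unfolding valid_def by auto
    have lm: "legal_move N d (pt d i) w"
      using lw P[OF i(1)] unfolding legal_move_def by auto
    have "bal d (s(pt d i := Some w))"
      unfolding bal_def
    proof (intro allI impI)
      fix j assume j: "j \<le> d"
      show "(s(pt d i := Some w)) (pt d j) = (s(pt d i := Some w)) j"
      proof (cases "j = i \<or> j = pt d i")
        case True
        then show ?thesis using w P[OF i(1)] P[OF j] by auto
      next
        case False
        hence "pt d j \<noteq> i" "pt d j \<noteq> pt d i" using P[OF i(1)] P[OF j] by metis+
        then show ?thesis using False i(4) j unfolding bal_def by auto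
      qed
    qed
    thus "\<exists>i v. s i = None \<and> legal_move N d i v \<and> Qp N d False (s(i := Some v))"
      using i(3) lm valid_upd[OF v lm] unfolding Qp_def by (intro exI[of _ "pt d i"] exI[of _ w]) simp
  next
    fix s i v assume q: "Qp N d False s" and nc: "\<not> complete_pos d s" and si: "s i = None"
      and l: "legal_move N d i v"
    have i: "i \<le> d" using l by (simp add: legal_move_def)
    have b: "bal d s" and vs: "valid N d s" using q unfolding Qp_def by auto
    have "s (pt d i) = None" using b si i unfolding bal_def by auto
    moreover have "(s(i := Some v)) (pt d i) = s (pt d i)" using P[OF i] by auto
    moreover have "(s(i := Some v))(i := None) = s" using si by auto
    ultimately show "Qp N d True (s(i := Some v))"
      unfolding Qp_def using valid_upd[OF vs l] b i P(3)[OF i] by (auto intro!: exI[of _ i])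
  qed
  moreover have "Qp N d False (\<lambda>_. None)" unfolding Qp_def valid_def bal_def by simp
  ultimately show ?thesis by blast
qed

definition cf :: "nat \<Rightarrow> nat \<Rightarrow> int \<Rightarrow> int" where
  "cf p k a = int p * ((-(1 + a div (int p)^k)) mod int p)"

definition Gd :: "nat \<Rightarrow> nat \<Rightarrow> nat \<Rightarrow> (nat \<Rightarrow> int option) \<Rightarrow> bool" where
  "Gd p k d s = (s 1 = Some 1 \<or> (\<exists>a. s 1 = Some a \<and> (d = 1 \<or> s 2 = Some (cf p k a))))"

lemma sum_le1: "(\<Sum>i\<le>(1::nat). c i * (x::int)^i) = c 0 + c 1 * x"
  by (simp add: atMost_Suc)
lemma sum_le2: "(\<Sum>i\<le>(2::nat). c i * (x::int)^i) = c 0 + c 1 * x + c 2 * x^2"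
  by (simp add: atMost_Suc numeral_2_eq_2)

lemma pow_dvd_pow_int: "m \<le> n \<Longrightarrow> (P::int)^m dvd P^n"
  by (simp add: le_imp_power_dvd)

lemma root_first:
  assumes pr: "prime p" and k: "k \<ge> 3" and N: "N = p^(2*k)" and d: "odd d"
    and v: "valid N d s" and c: "complete_pos d s" and s0: "s 0 = Some ((int p)^(2*k-1))"
    and G: "Gd p k d s"
  shows "has_root_mod N d s"
proof -
  define P where "P = int p"
  define M where "M = P^(2*k-1)"
  have NP: "int N = P^(2*k)" unfolding N P_def by simp
  have Npos: "N > 0" using N pr prime_gt_0_nat by simp
  have P1: "P > 1" unfolding P_def using pr prime_gt_1_nat by simp
  define c where "c i = the (s i)" for i
  have c0: "c 0 = M" using s0 unfolding c_def M_def P_def by simp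
  have d1: "1 \<le> d" using d by (cases d) auto
  have PM: "P * M = P^(2*k)" unfolding M_def using k by (cases "2*k") auto
  show ?thesis
  proof (cases "s 1 = Some 1")
    case True
    have "[(\<Sum>i\<le>d. c i * (-M)^i) = (\<Sum>i\<le>1. c i * (-M)^i)] (mod int N)"
    proof (rule trunc[OF _ d1])
      fix i :: nat assume "i > 1"
      hence "(2*k-1)*2 \<le> (2*k-1)*i" by (intro mult_le_mono2) simp
      hence "(2*k-1)*i \<ge> 2*k" using k by linarith
      hence "P^(2*k) dvd P^((2*k-1)*i)" by (rule pow_dvd_pow_int)
      hence "P^(2*k) dvd M^i" unfolding M_def by (simp add: power_mult)
      thus "int N dvd (-M)^i" unfolding NP by (simp add: power_minus' )
    qed
    moreover have "c 1 = 1" using True unfolding c_def by simp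
    ultimately have "[(\<Sum>i\<le>d. c i * (-M)^i) = 0] (mod int N)" using c0 by (simp add: sum_le1)
    thus ?thesis unfolding c_def by (rule root_from_cong) (use Npos in simp)
  next
    case False
    then obtain a where a: "s 1 = Some a" and d12: "d = 1 \<or> s 2 = Some (cf p k a)"
      using G unfolding Gd_def by auto
    have c1: "c 1 = a" using a unfolding c_def by simp
    have la: "legal_move N d 1 a" using v a unfolding valid_def by auto
    show ?thesis
    proof (cases "d = 1")
      case True
      have "a \<noteq> 0" "0 \<le> a" "a < P^(2*k)" using la True NP unfolding legal_move_def by auto
      hence nd: "\<not> P^(2*k) dvd a" using zdvd_not_zless by fastforce
      obtain y where y: "[a*y = -(P^(2*k-1))] (mod P^(2*k))"
        using solveL[OF pr _ nd[unfolded P_def]] k unfolding P_def by auto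
      have "[M + a*y = M + -(P^(2*k-1))] (mod P^(2*k))" by (rule cong_add[OF cong_refl y])
      hence "[(\<Sum>i\<le>d. c i * y^i) = 0] (mod int N)"
        using True c0 c1 NP unfolding M_def by (simp add: sum_le1)
      thus ?thesis unfolding c_def by (rule root_from_cong) (use Npos in simp)
    next
      case False
      hence s2: "s 2 = Some (cf p k a)" using d12 by simp
      have c2: "c 2 = cf p k a" using s2 unfolding c_def by simp
      have d3: "d \<ge> 2" using False d1 d by (cases "d = 2") auto
      show ?thesis
      proof (cases "P^k dvd a")
        case False
        obtain y where y: "[a*y = -(P^(k-1))] (mod P^k)"
          using solveL[OF pr _ False[unfolded P_def]] k unfolding P_def by auto
        define x where "x = P^k * y"
        have "[(\<Sum>i\<le>d. c i * x^i) = (\<Sum>i\<le>1. c i * x^i)] (mod int N)"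
        proof (rule trunc[OF _ d1])
          fix i :: nat assume "i > 1"
          hence "k*i \<ge> 2*k" by simp
          hence "P^(2*k) dvd P^(k*i)" by (rule pow_dvd_pow_int)
          hence "P^(2*k) dvd (P^k)^i * y^i" by (simp add: power_mult)
          thus "int N dvd x^i" unfolding NP x_def by (simp add: power_mult_distrib)
        qed
        moreover have "int N dvd M + a * x"
        proof -
          have "P^k dvd a*y + P^(k-1)" using y by (simp add: cong_iff_dvd_diff)
          hence "P^k * P^k dvd P^k * (a*y + P^(k-1))" by simp
          moreover have "P^k * P^k = P^(2*k)" by (simp add: power_add[symmetric] mult_2)
          moreover have "P^k * (a*y + P^(k-1)) = M + a * x"
          proof -
            have e: "2*k-1 = k + (k-1)" using k by simp
            show ?thesis unfolding M_def x_def e power_add by (simp add: distrib_left ac_simps)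
          qed
          ultimately show ?thesis unfolding NP by simp
        qed
        ultimately have "[(\<Sum>i\<le>d. c i * x^i) = 0] (mod int N)"
          using c0 c1 by (simp add: sum_le1 cong_0_iff cong_def)
        thus ?thesis unfolding c_def by (rule root_from_cong) (use Npos in simp)
      next
        case True
        then obtain b where b: "a = P^k * b" by auto
        have adiv: "a div P^k = b" using b P1 by simp
        define r where "r = (-(1 + b)) mod P"
        have cfa: "cf p k a = P * r" unfolding cf_def r_def P_def[symmetric] adiv by simp
        define x where "x = P^(k-1)"
        have "[(\<Sum>i\<le>d. c i * x^i) = (\<Sum>i\<le>2. c i * x^i)] (mod int N)"
        proof (rule trunc[OF _ d3])
          fix i :: nat assume "i > 2"
          hence "(k-1)*i \<ge> 2*k" using k
          proof -
            have "(k-1)*3 \<le> (k-1)*i" using \<open>i > 2\<close> by (intro mult_le_mono2) simp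
            thus ?thesis using k by linarith
          qed
          hence "P^(2*k) dvd P^((k-1)*i)" by (rule pow_dvd_pow_int)
          thus "int N dvd x^i" unfolding NP x_def by (simp add: power_mult)
        qed
        moreover have "int N dvd M + a * x + cf p k a * x^2"
        proof -
          have "(1 + b + r) mod P = ((1 + b) + (-(1 + b))) mod P" unfolding r_def by (rule mod_add_right_eq)
          hence "P dvd 1 + b + r" by (simp add: mod_eq_0_iff_dvd)
          hence "P * M dvd M * (1 + b + r)" by (metis mult.commute mult_dvd_mono dvd_refl)
          moreover have "M * (1 + b + r) = M + a * x + cf p k a * x^2"
          proof -
            have e1: "P^k * x = M" unfolding M_def x_def power_add[symmetric] using k
              by (simp add: mult_2)
            have ex: "2*k-1 = Suc ((k-1)*2)" using k by simp
            have e2: "P * x^2 = M" unfolding M_def x_def ex power_Suc power_mult by simp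
            have "a * x = b * M" unfolding b e1[symmetric] by (simp add: ac_simps)
            moreover have "cf p k a * x^2 = r * M" unfolding cfa e2[symmetric] by (simp add: ac_simps)
            ultimately show ?thesis by (simp add: algebra_simps)
          qed
          ultimately show ?thesis unfolding NP PM by simp
        qed
        ultimately have "[(\<Sum>i\<le>d. c i * x^i) = 0] (mod int N)"
          using c0 c1 c2 by (simp add: sum_le2 cong_0_iff cong_def)
        thus ?thesis unfolding c_def by (rule root_from_cong) (use Npos in simp)
      qed
    qed
  qed
qed


definition Qf :: "nat \<Rightarrow> nat \<Rightarrow> nat \<Rightarrow> nat \<Rightarrow> bool \<Rightarrow> (nat \<Rightarrow> int option) \<Rightarrow> bool" where
  "Qf p k N d t s = (valid N d s \<and> (
     (t \<and> s = (\<lambda>_. None)) \<or>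
     (\<not> t \<and> s = (\<lambda>_. None)(0 := Some ((int p)^(2*k-1)))) \<or>
     (t \<and> d \<noteq> 1 \<and> s 0 = Some ((int p)^(2*k-1)) \<and> (\<exists>j. j \<noteq> 0 \<and> (\<forall>i. i \<noteq> 0 \<and> i \<noteq> j \<longrightarrow> s i = None))) \<or>
     (s 0 = Some ((int p)^(2*k-1)) \<and> Gd p k d s)))"

lemma Gd_upd: "s 0 = Some m \<Longrightarrow> Gd p k d s \<Longrightarrow> s i = None \<Longrightarrow> Gd p k d (s(i := Some v))"
  unfolding Gd_def by auto

lemma first_wins:
  assumes pr: "prime p" and k: "k \<ge> 3" and N: "N = p^(2*k)" and d: "odd d"
  shows "wanda_wins N d True (\<lambda>_. None)"
proof -
  define P where "P = int p"
  define M where "M = P^(2*k-1)"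
  have NP: "int N = P^(2*k)" unfolding N P_def by simp
  have P1: "P > 1" unfolding P_def using pr prime_gt_1_nat by simp
  have M0: "M > 0" unfolding M_def using P1 by simp
  have MN: "M < int N" unfolding NP M_def using P1 k by (intro power_strict_increasing) auto
  have N1: "1 < int N" using MN M0 by simp
  have d1: "1 \<le> d" using d by (cases d) auto
  have legM: "legal_move N d 0 M" unfolding legal_move_def using M0 MN by simp
  have leg1: "legal_move N d i 1" if "i \<le> d" for i unfolding legal_move_def using that N1 by simp
  have legcf: "legal_move N d 2 (cf p k a)" if "d \<noteq> 1" for a
  proof -
    have d3: "2 \<le> d" "2 \<noteq> d" using that d d1 by (cases "d = 2"; auto)+
    define r where "r = (-(1 + a div P^k)) mod P"
    have cfa: "cf p k a = P * r" unfolding cf_def r_def P_def by simp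
    have r: "0 \<le> r" "r < P" unfolding r_def using P1 by auto
    have "P * r < P * P" using r P1 by simp
    also have "P * P = P^2" by (simp add: power2_eq_square)
    also have "P^2 \<le> P^(2*k)" using P1 k by (intro power_increasing) auto
    finally have "P * r < int N" unfolding NP .
    moreover have "0 \<le> P * r" using r P1 by simp
    ultimately show ?thesis unfolding legal_move_def cfa using d3 by simp
  qed
  have MM: "M = (int p)^(2*k-1)" unfolding M_def P_def ..
  have "Qf p k N d t s \<Longrightarrow> wanda_wins N d t s" for t s
  proof (rule strategy)
    fix t s assume q: "Qf p k N d t s" and c: "complete_pos d s"
    have v: "valid N d s" using q unfolding Qf_def by simp
    have c1: "s 1 \<noteq> None" "s 0 \<noteq> None" using c d1 unfolding complete_pos_def by auto
    have "\<not> (d \<noteq> 1 \<and> (\<exists>j. j \<noteq> 0 \<and> (\<forall>i. i \<noteq> 0 \<and> i \<noteq> j \<longrightarrow> s i = None)))"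
    proof
      assume "d \<noteq> 1 \<and> (\<exists>j. j \<noteq> 0 \<and> (\<forall>i. i \<noteq> 0 \<and> i \<noteq> j \<longrightarrow> s i = None))"
      then obtain j where "d \<noteq> 1" "j \<noteq> 0" "\<forall>i. i \<noteq> 0 \<and> i \<noteq> j \<longrightarrow> s i = None" by auto
      moreover have "s 2 \<noteq> None" using c \<open>d \<noteq> 1\<close> d d1 unfolding complete_pos_def
        by (cases "d = 2") auto
      ultimately show False using c1 by (cases "j = 1") auto
    qed
    hence "s 0 = Some M \<and> Gd p k d s" using q c1 unfolding Qf_def MM by auto
    thus "has_root_mod N d s" using root_first[OF pr k N d v c] unfolding MM by auto
  next
    fix s assume q: "Qf p k N d True s" and nc: "\<not> complete_pos d s"
    have v: "valid N d s" using q unfolding Qf_def by simp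
    consider (a) "s = (\<lambda>_. None)"
      | (b) "d \<noteq> 1" "s 0 = Some M" "\<exists>j. j \<noteq> 0 \<and> (\<forall>i. i \<noteq> 0 \<and> i \<noteq> j \<longrightarrow> s i = None)"
      | (c) "s 0 = Some M" "Gd p k d s"
      using q unfolding Qf_def MM by auto
    thus "\<exists>i v. s i = None \<and> legal_move N d i v \<and> Qf p k N d False (s(i := Some v))"
    proof cases
      case a
      thus ?thesis using legM valid_upd[OF v legM] unfolding Qf_def MM[symmetric]
        by (intro exI[of _ 0] exI[of _ M]) simp
    next
      case b
      then obtain j where j: "j \<noteq> 0" "\<forall>i. i \<noteq> 0 \<and> i \<noteq> j \<longrightarrow> s i = None" by auto
      show ?thesis
      proof (cases "s 1 = None")
        case True
        have "Gd p k d (s(1 := Some 1))" unfolding Gd_def by simp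
        thus ?thesis using True leg1[OF d1] valid_upd[OF v leg1[OF d1]] b(2) unfolding Qf_def MM[symmetric]
          by (intro exI[of _ 1] exI[of _ 1]) simp
      next
        case False
        then obtain a where a: "s 1 = Some a" by auto
        have j1: "j = 1" using j a by (metis option.distinct(1) one_neq_zero)
        have s2: "s 2 = None" using j j1 by simp
        have "Gd p k d (s(2 := Some (cf p k a)))" unfolding Gd_def using a by simp
        thus ?thesis using s2 legcf[OF b(1)] valid_upd[OF v legcf[OF b(1)]] b(2) unfolding Qf_def MM[symmetric]
          by (intro exI[of _ 2] exI[of _ "cf p k a"]) simp
      qed
    next
      case c
      obtain i where i: "i \<le> d" "s i = None" using nc unfolding complete_pos_def by auto
      have "Gd p k d (s(i := Some 1))" by (rule Gd_upd[OF c(1) c(2) i(2)])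
      moreover have "i \<noteq> 0" using i(2) c(1) by (metis option.distinct(1))
      ultimately show ?thesis using i leg1[OF i(1)] valid_upd[OF v leg1[OF i(1)]] c(1) unfolding Qf_def MM[symmetric]
        by (intro exI[of _ i] exI[of _ 1]) simp
    qed
  next
    fix s i v assume q: "Qf p k N d False s" and nc: "\<not> complete_pos d s" and si: "s i = None"
      and l: "legal_move N d i v"
    have vs: "valid N d s" using q unfolding Qf_def by simp
    have iled: "i \<le> d" using l by (simp add: legal_move_def)
    consider (a) "s = (\<lambda>_. None)(0 := Some M)"
      | (c) "s 0 = Some M" "Gd p k d s"
      using q unfolding Qf_def MM by auto
    thus "Qf p k N d True (s(i := Some v))"
    proof cases
      case a
      have i0: "i \<noteq> 0" using si a by (auto split: if_splits)
      show ?thesis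
      proof (cases "d = 1")
        case True
        hence "i = 1" using i0 iled by simp
        hence "Gd p k d (s(i := Some v))" unfolding Gd_def using True by simp
        thus ?thesis using valid_upd[OF vs l] a i0 unfolding Qf_def MM[symmetric] by simp
      next
        case False
        have "\<exists>j. j \<noteq> 0 \<and> (\<forall>i'. i' \<noteq> 0 \<and> i' \<noteq> j \<longrightarrow> (s(i := Some v)) i' = None)"
          using i0 a by (intro exI[of _ i]) simp
        thus ?thesis using valid_upd[OF vs l] a i0 False unfolding Qf_def MM[symmetric] by simp
      qed
    next
      case c
      have "Gd p k d (s(i := Some v))" by (rule Gd_upd[OF c(1) c(2) si])
      moreover have "i \<noteq> 0" using si c(1) by (metis option.distinct(1))
      ultimately show ?thesis using valid_upd[OF vs l] c(1) unfolding Qf_def MM[symmetric] by simp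
    qed
  qed
  moreover have "Qf p k N d True (\<lambda>_. None)" unfolding Qf_def valid_def by simp
  ultimately show ?thesis by blast
qed

theorem lemma7:
  fixes p k d N :: nat
  assumes "prime p" and "k \<ge> 3" and "N = p ^ (2 * k)" and "odd d"
  shows "wanda_wins N d True (\<lambda>_. None) \<and> wanda_wins N d False (\<lambda>_. None)"
proof
  show "wanda_wins N d True (\<lambda>_. None)" by (rule first_wins[OF assms])
  have "p \<ge> 2" using assms(1) prime_ge_2_nat by simp
  hence "p^(2*k) \<ge> 2^(2*k)" by (rule power_mono) simp
  moreover have "(2::nat)^(2*k) \<ge> 2" using assms(2)
    using power_increasing[of 1 "2*k" "2::nat"] by simp
  ultimately have "N \<ge> 2" using assms(3) by linarith
  thus "wanda_wins N d False (\<lambda>_. None)" by (rule second_wins[OF assms(4)])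
qed

end
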